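(* Let $(\Gamma,c)$ be a real Fuchsian group and $\gamma\in\Gamma$ an admissible element. Then the elliptic points of even order lying on $C_\gamma$ correspond bijectively to the elements of order two of $Z_\gamma$, where the point $z$ corresponds to $\sigma$ if $\sigma$ stabilizes $z$.
   Context: $\mathfrak{h}$ is the upper half-plane. A complex conjugation is an anti-holomorphic involution $c$ of $\mathfrak{h}$; for $\gamma\in\mathrm{PSL}_2(\mathbf{R})$, $\gamma^c=c\gamma c$. A real Fuchsian group is a pair $(\Gamma,c)$ with $\Gamma\subseteq\mathrm{PSL}_2(\mathbf{R})$ discrete, $c$ a complex conjugation, $\Gamma^c=\Gamma$, and $\mathfrak{h}^*/\Gamma$ compact, where $\mathfrak{h}^*$ is $\mathfrak{h}$ with the cusps of $\Gamma$ adjoined. $\gamma$ is admissible if $\gamma^c=\gamma^{-1}$; $C_\gamma=\{z\in\mathfrak{h}^*:\gamma z=cz\}$; $Z_\gamma=\{\sigma\in\Gamma:\sigma^c\gamma\sigma^{-1}=\gamma\}$. An elliptic point of even order is a point of $\mathfrak{h}$ whose stabilizer in $\Gamma$ is (finite cyclic) of even order. *)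

theory Defs
  imports "HOL-Complex_Analysis.Complex_Analysis"
begin

definition uhp :: "complex set" where
  "uhp = {z. Im z > 0}"

type_synonym mat2 = "real \<times> real \<times> real \<times> real"  (* (a,b,c,d) = [[a,b],[c,d]] *)

definition sl2 :: "mat2 \<Rightarrow> bool" where
  "sl2 M = (case M of (a,b,c,d) \<Rightarrow> a*d - b*c = 1)"

text \<open>An element of PSL2(R) is represented by the Moebius map it induces on the
  upper half-plane (restricted to uhp, so that +M and -M give the same object).\<close>
definition mob :: "mat2 \<Rightarrow> complex \<Rightarrow> complex" where
  "mob M = (case M of (a,b,c,d) \<Rightarrow>
     restrict (\<lambda>z. (of_real a * z + of_real b) / (of_real c * z + of_real d)) uhp)"

definition PSL2R :: "(complex \<Rightarrow> complex) set" where
  "PSL2R = mob ` {M. sl2 M}"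

definition mid :: "complex \<Rightarrow> complex" where
  "mid = restrict id uhp"

definition mcomp :: "(complex \<Rightarrow> complex) \<Rightarrow> (complex \<Rightarrow> complex) \<Rightarrow> complex \<Rightarrow> complex" where
  "mcomp f g = restrict (f \<circ> g) uhp"

definition minv :: "(complex \<Rightarrow> complex) \<Rightarrow> complex \<Rightarrow> complex" where
  "minv f = restrict (inv_into uhp f) uhp"

text \<open>A representative matrix (well defined up to sign).\<close>
definition mat_of :: "(complex \<Rightarrow> complex) \<Rightarrow> mat2" where
  "mat_of f = (SOME M. sl2 M \<and> mob M = f)"

definition complex_conjugation :: "(complex \<Rightarrow> complex) \<Rightarrow> bool" where
  "complex_conjugation c \<longleftrightarrow>
     (\<forall>z\<in>uhp. c z \<in> uhp) \<and> (\<forall>z\<in>uhp. c (c z) = z) \<and>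
     ((\<lambda>z. cnj (c z)) holomorphic_on uhp)"

definition conj_by :: "(complex \<Rightarrow> complex) \<Rightarrow> (complex \<Rightarrow> complex) \<Rightarrow> complex \<Rightarrow> complex" where
  "conj_by c g = restrict (c \<circ> g \<circ> c) uhp"

definition discrete_subgroup :: "(complex \<Rightarrow> complex) set \<Rightarrow> bool" where
  "discrete_subgroup \<Gamma> \<longleftrightarrow>
     \<Gamma> \<subseteq> PSL2R \<and> mid \<in> \<Gamma> \<and> (\<forall>f\<in>\<Gamma>. \<forall>g\<in>\<Gamma>. mcomp f g \<in> \<Gamma>) \<and> (\<forall>f\<in>\<Gamma>. minv f \<in> \<Gamma>) \<and>
     (\<forall>M. sl2 M \<and> mob M \<in> \<Gamma> \<longrightarrow> M isolated_in {N. sl2 N \<and> mob N \<in> \<Gamma>})"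

datatype extpt = Fin complex | Infty

definition bact :: "mat2 \<Rightarrow> extpt \<Rightarrow> extpt" where
  "bact M p = (case M of (a,b,c,d) \<Rightarrow>
     (case p of
        Infty \<Rightarrow> (if c = 0 then Infty else Fin (of_real (a / c)))
      | Fin z \<Rightarrow> (if of_real c * z + of_real d = 0 then Infty
                  else Fin ((of_real a * z + of_real b) / (of_real c * z + of_real d)))))"

definition act :: "(complex \<Rightarrow> complex) \<Rightarrow> extpt \<Rightarrow> extpt" where
  "act f p = bact (mat_of f) p"

definition parabolic :: "(complex \<Rightarrow> complex) \<Rightarrow> bool" where
  "parabolic f \<longleftrightarrow> f \<in> PSL2R \<and> f \<noteq> mid \<and>
     (case mat_of f of (a,b,c,d) \<Rightarrow> \<bar>a + d\<bar> = 2)"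

definition cusps :: "(complex \<Rightarrow> complex) set \<Rightarrow> extpt set" where
  "cusps \<Gamma> = {p. (p = Infty \<or> (\<exists>x::real. p = Fin (of_real x))) \<and>
                   (\<exists>f\<in>\<Gamma>. parabolic f \<and> act f p = p)}"

definition hstar :: "(complex \<Rightarrow> complex) set \<Rightarrow> extpt set" where
  "hstar \<Gamma> = Fin ` uhp \<union> cusps \<Gamma>"

text \<open>Horodisc neighbourhood (without the cusp itself) of a boundary point.\<close>
definition horodisc :: "extpt \<Rightarrow> real \<Rightarrow> extpt set" where
  "horodisc p r = (case p of
      Infty \<Rightarrow> Fin ` {z. Im z > r}
    | Fin x \<Rightarrow> Fin ` ball (x + \<i> * of_real r) r)"

definition openstar :: "(complex \<Rightarrow> complex) set \<Rightarrow> extpt set \<Rightarrow> bool" where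
  "openstar \<Gamma> U \<longleftrightarrow> U \<subseteq> hstar \<Gamma> \<and> open (Fin -` U \<inter> uhp) \<and>
     (\<forall>s \<in> U \<inter> cusps \<Gamma>. \<exists>r>0. insert s (horodisc s r) \<subseteq> U)"

definition hstar_top :: "(complex \<Rightarrow> complex) set \<Rightarrow> extpt topology" where
  "hstar_top \<Gamma> = topology (openstar \<Gamma>)"

definition orbit :: "(complex \<Rightarrow> complex) set \<Rightarrow> extpt \<Rightarrow> extpt set" where
  "orbit \<Gamma> p = {act f p | f. f \<in> \<Gamma>}"

definition compact_quotient :: "(complex \<Rightarrow> complex) set \<Rightarrow> bool" where
  "compact_quotient \<Gamma> \<longleftrightarrow>
     (\<exists>Q. quotient_map (hstar_top \<Gamma>) Q (orbit \<Gamma>) \<and> compact_space Q)"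

definition real_fuchsian :: "(complex \<Rightarrow> complex) set \<Rightarrow> (complex \<Rightarrow> complex) \<Rightarrow> bool" where
  "real_fuchsian \<Gamma> c \<longleftrightarrow> discrete_subgroup \<Gamma> \<and> complex_conjugation c \<and>
     conj_by c ` \<Gamma> = \<Gamma> \<and> compact_quotient \<Gamma>"

definition admissible :: "(complex \<Rightarrow> complex) \<Rightarrow> (complex \<Rightarrow> complex) \<Rightarrow> bool" where
  "admissible c g \<longleftrightarrow> conj_by c g = minv g"

text \<open>Points of \<open>C_\<gamma>\<close> lying in the upper half-plane (cusps are never elliptic).\<close>
definition Cset :: "(complex \<Rightarrow> complex) \<Rightarrow> (complex \<Rightarrow> complex) \<Rightarrow> complex set" where
  "Cset c g = {z \<in> uhp. g z = c z}"

definition Zset :: "(complex \<Rightarrow> complex) set \<Rightarrow> (complex \<Rightarrow> complex) \<Rightarrow> (complex \<Rightarrow> complex)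
                     \<Rightarrow> (complex \<Rightarrow> complex) set" where
  "Zset \<Gamma> c g = {\<sigma> \<in> \<Gamma>. mcomp (mcomp (conj_by c \<sigma>) g) (minv \<sigma>) = g}"

definition stab :: "(complex \<Rightarrow> complex) set \<Rightarrow> complex \<Rightarrow> (complex \<Rightarrow> complex) set" where
  "stab \<Gamma> z = {\<sigma> \<in> \<Gamma>. \<sigma> z = z}"

definition elliptic_even :: "(complex \<Rightarrow> complex) set \<Rightarrow> complex \<Rightarrow> bool" where
  "elliptic_even \<Gamma> z \<longleftrightarrow> z \<in> uhp \<and> finite (stab \<Gamma> z) \<and> even (card (stab \<Gamma> z))"

definition order_two :: "(complex \<Rightarrow> complex) \<Rightarrow> bool" where
  "order_two \<sigma> \<longleftrightarrow> \<sigma> \<noteq> mid \<and> mcomp \<sigma> \<sigma> = mid"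

end

theory Submission
  imports Defs
begin


definition mmul :: "mat2 \<Rightarrow> mat2 \<Rightarrow> mat2" where
  "mmul M N = (case M of (a,b,c,d) \<Rightarrow> case N of (a',b',c',d') \<Rightarrow>
     (a*a'+b*c', a*b'+b*d', c*a'+d*c', c*b'+d*d'))"

definition adj :: "mat2 \<Rightarrow> mat2" where
  "adj M = (case M of (a,b,c,d) \<Rightarrow> (d,-b,-c,a))"

lemma den_nz:
  assumes "a*d - b*c = (1::real)" "z \<in> uhp"
  shows "of_real c * z + of_real d \<noteq> 0"
proof
  assume h: "of_real c * z + of_real d = 0"
  have "Im z > 0" using assms(2) by (simp add: uhp_def)
  have "Im (of_real c * z + of_real d) = c * Im z" by simp
  with h have "c * Im z = 0" by simp
  hence "c = 0" using \<open>Im z > 0\<close> by simp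
  with h have "d = 0" by simp
  with \<open>c = 0\<close> assms(1) show False by simp
qed

lemma Im_mob:
  assumes "a*d - b*c = (1::real)" "z \<in> uhp"
  shows "Im ((of_real a * z + of_real b) / (of_real c * z + of_real d)) > 0"
proof -
  obtain x y where z: "z = Complex x y" by (cases z)
  have y: "y > 0" using assms(2) z by (simp add: uhp_def)
  have nz: "(c*x+d)^2 + (c*y)^2 \<noteq> 0"
    using den_nz[OF assms] z by (auto simp: complex_eq_iff power2_eq_square)
  hence pos: "(c*x+d)^2 + (c*y)^2 > 0" by (simp add: add_nonneg_nonneg order_less_le)
  have "Im ((of_real a * z + of_real b) / (of_real c * z + of_real d))
      = (a*y*(c*x+d) - (a*x+b)*(c*y)) / ((c*x+d)^2 + (c*y)^2)"
    by (simp add: z Im_divide power2_eq_square)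
  also have "a*y*(c*x+d) - (a*x+b)*(c*y) = y * (a*d-b*c)" by (simp add: algebra_simps)
  finally show ?thesis using assms(1) y pos by simp
qed

lemma mob_in:
  assumes "sl2 M" "z \<in> uhp"
  shows "mob M z \<in> uhp"
  using assms Im_mob[of "fst M" "snd (snd (snd M))" "fst (snd M)" "fst (snd (snd M))" z]
  by (cases M) (auto simp: sl2_def mob_def uhp_def)

lemma mob_out: "z \<notin> uhp \<Longrightarrow> mob M z = undefined"
  by (cases M) (auto simp: mob_def)

lemma mob_eval: "z \<in> uhp \<Longrightarrow> mob (a,b,c,d) z = (of_real a * z + of_real b) / (of_real c * z + of_real d)"
  by (simp add: mob_def)

lemma sl2_mmul: "sl2 M \<Longrightarrow> sl2 N \<Longrightarrow> sl2 (mmul M N)"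
proof -
  obtain a b c d where M: "M = (a,b,c,d)" by (cases M)
  obtain a' b' c' d' where N: "N = (a',b',c',d')" by (cases N)
  assume "sl2 M" "sl2 N"
  thus ?thesis unfolding M N sl2_def mmul_def by simp algebra
qed

lemma sl2_adj: "sl2 M \<Longrightarrow> sl2 (adj M)"
  by (cases M) (simp add: sl2_def adj_def algebra_simps)

lemma mob_mmul:
  assumes "sl2 M" "sl2 N"
  shows "mob (mmul M N) = mcomp (mob M) (mob N)"
proof
  fix z
  show "mob (mmul M N) z = mcomp (mob M) (mob N) z"
  proof (cases "z \<in> uhp")
    case False thus ?thesis by (simp add: mob_out mcomp_def)
  next
    case True
    obtain a b c d where M: "M = (a,b,c,d)" by (cases M)
    obtain a' b' c' d' where N: "N = (a',b',c',d')" by (cases N)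
    have n1: "of_real c' * z + of_real d' \<noteq> 0" using den_nz True assms(2) N by (simp add: sl2_def)
    have inz: "mob N z \<in> uhp" using mob_in assms(2) True by blast
    have n2': "of_real c * mob N z + of_real d \<noteq> 0"
      using den_nz[of a d b c, OF _ inz] assms(1) M by (simp add: sl2_def)
    have n2: "of_real c * ((of_real a' * z + of_real b') / (of_real c' * z + of_real d')) + of_real d \<noteq> 0"
      using n2' mob_eval[OF True, of a' b' c' d'] N by simp
    have "mob (mmul M N) z = (of_real (a*a'+b*c') * z + of_real (a*b'+b*d')) / (of_real (c*a'+d*c') * z + of_real (c*b'+d*d'))"
      using True by (simp add: M N mmul_def mob_def)
    also have "\<dots> = (of_real a * ((of_real a' * z + of_real b') / (of_real c' * z + of_real d')) + of_real b) /
       (of_real c * ((of_real a' * z + of_real b') / (of_real c' * z + of_real d')) + of_real d)"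
    proof -
      define P where "P = of_real a' * z + of_real b'"
      define Q where "Q = of_real c' * z + of_real d'"
      have Q: "Q \<noteq> 0" using n1 Q_def by simp
      have e1: "of_real a * (P/Q) + of_real b = (of_real a * P + of_real b * Q) / Q" using Q by (simp add: field_simps)
      have e2: "of_real c * (P/Q) + of_real d = (of_real c * P + of_real d * Q) / Q" using Q by (simp add: field_simps)
      have e3: "of_real a * P + of_real b * Q = of_real (a*a'+b*c') * z + of_real (a*b'+b*d')"
        by (simp add: P_def Q_def algebra_simps)
      have e4: "of_real c * P + of_real d * Q = of_real (c*a'+d*c') * z + of_real (c*b'+d*d')"
        by (simp add: P_def Q_def algebra_simps)
      show ?thesis unfolding P_def[symmetric] Q_def[symmetric] e1 e2 using Q
        by (simp add: e3 e4)
    qed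
    finally show ?thesis using True inz by (simp add: mcomp_def M N mob_def)
  qed
qed

lemma mob_id: "mob (1,0,0,1) = mid"
  by (rule ext) (simp add: mob_def mid_def restrict_def)

lemma sl2_id: "sl2 (1,0,0,1)" by (simp add: sl2_def)

lemma mmul_adj: "sl2 M \<Longrightarrow> mmul M (adj M) = (1,0,0,1)"
  by (cases M) (auto simp: sl2_def mmul_def adj_def algebra_simps)

lemma adj_mmul: "sl2 M \<Longrightarrow> mmul (adj M) M = (1,0,0,1)"
  by (cases M) (auto simp: sl2_def mmul_def adj_def algebra_simps)

lemma mcomp_eval: "z \<in> uhp \<Longrightarrow> mcomp f g z = f (g z)"
  by (simp add: mcomp_def)

lemma mid_eval: "z \<in> uhp \<Longrightarrow> mid z = z"
  by (simp add: mid_def)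

lemma mob_adj_l: assumes "sl2 M" "z \<in> uhp" shows "mob M (mob (adj M) z) = z"
proof -
  have "mob (mmul M (adj M)) z = z" using mmul_adj[OF assms(1)] mob_id mid_eval assms(2) by simp
  thus ?thesis using mob_mmul[OF assms(1) sl2_adj[OF assms(1)]] mcomp_eval assms(2) by simp
qed

lemma mob_adj_r: assumes "sl2 M" "z \<in> uhp" shows "mob (adj M) (mob M z) = z"
proof -
  have "mob (mmul (adj M) M) z = z" using adj_mmul[OF assms(1)] mob_id mid_eval assms(2) by simp
  thus ?thesis using mob_mmul[OF sl2_adj[OF assms(1)] assms(1)] mcomp_eval assms(2) by simp
qed

lemma mob_inj: "sl2 M \<Longrightarrow> inj_on (mob M) uhp"
  by (metis inj_onI mob_adj_r)

lemma mob_adj: assumes "sl2 M" shows "mob (adj M) = minv (mob M)"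
proof
  fix z show "mob (adj M) z = minv (mob M) z"
  proof (cases "z \<in> uhp")
    case False thus ?thesis by (simp add: mob_out minv_def)
  next
    case True
    have "inv_into uhp (mob M) z = mob (adj M) z"
      by (rule inv_into_f_eq[OF mob_inj[OF assms]])
         (use True assms mob_in sl2_adj mob_adj_l in auto)
    thus ?thesis using True by (simp add: minv_def)
  qed
qed

definition mneg :: "mat2 \<Rightarrow> mat2" where
  "mneg M = (case M of (a,b,c,d) \<Rightarrow> (-a,-b,-c,-d))"

lemma mob_neg: "mob (mneg M) = mob M"
proof -
  obtain a b c d where M: "M = (a,b,c,d)" by (cases M)
  have "\<And>z. (of_real (-a) * z + of_real (-b)) / (of_real (-c) * z + of_real (-d)) =
        (of_real a * z + of_real b) / (of_real c * z + of_real d :: complex)"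
  proof -
    fix z :: complex
    have "(of_real (-a) * z + of_real (-b)) = - (of_real a * z + of_real b)" by simp
    moreover have "(of_real (-c) * z + of_real (-d)) = - (of_real c * z + of_real d)" by simp
    ultimately show "?thesis z" by (metis minus_divide_divide)
  qed
  hence "(\<lambda>z. (of_real (-a) * z + of_real (-b)) / (of_real (-c) * z + of_real (-d))) =
        (\<lambda>z. (of_real a * z + of_real b) / (of_real c * z + of_real d :: complex))" by (rule ext)
  thus ?thesis unfolding M mneg_def mob_def by (simp only: prod.case)
qed

lemma PSL2R_E: assumes "f \<in> PSL2R" obtains M where "sl2 M" "f = mob M"
  using assms by (auto simp: PSL2R_def)

lemma P_in: "f \<in> PSL2R \<Longrightarrow> z \<in> uhp \<Longrightarrow> f z \<in> uhp"
  by (metis PSL2R_E mob_in)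

lemma P_out: "f \<in> PSL2R \<Longrightarrow> z \<notin> uhp \<Longrightarrow> f z = undefined"
  by (metis PSL2R_E mob_out)

lemma P_minv: "f \<in> PSL2R \<Longrightarrow> minv f \<in> PSL2R"
  by (metis PSL2R_E mob_adj sl2_adj PSL2R_def image_eqI mem_Collect_eq)

lemma P_mcomp: "f \<in> PSL2R \<Longrightarrow> g \<in> PSL2R \<Longrightarrow> mcomp f g \<in> PSL2R"
  by (metis PSL2R_E mob_mmul sl2_mmul PSL2R_def image_eqI mem_Collect_eq)

lemma P_minv_l: "f \<in> PSL2R \<Longrightarrow> z \<in> uhp \<Longrightarrow> f (minv f z) = z"
  by (metis PSL2R_E mob_adj mob_adj_l)

lemma P_minv_r: "f \<in> PSL2R \<Longrightarrow> z \<in> uhp \<Longrightarrow> minv f (f z) = z"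
  by (metis PSL2R_E mob_adj mob_adj_r)

lemma P_ext: "f \<in> PSL2R \<Longrightarrow> g \<in> PSL2R \<Longrightarrow> (\<And>z. z \<in> uhp \<Longrightarrow> f z = g z) \<Longrightarrow> f = g"
  by (rule ext) (metis P_out)

lemma mid_P: "mid \<in> PSL2R"
  using mob_id sl2_id unfolding PSL2R_def by force



lemma fix_iff:
  assumes "a*d - b*c = (1::real)" "z \<in> uhp"
  shows "mob (a,b,c,d) z = z \<longleftrightarrow> of_real a * z + of_real b = z * (of_real c * z + of_real d)"
  using den_nz[OF assms] assms(2) by (simp add: mob_eval divide_eq_eq)

lemma fix_components:
  assumes "of_real a * z + of_real b = z * (of_real c * z + of_real d)"
  shows "a * Re z + b = c * (Re z ^ 2 - Im z ^ 2) + d * Re z \<and> a * Im z = 2 * c * Re z * Im z + d * Im z"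
proof -
  have "Re (of_real a * z + of_real b) = Re (z * (of_real c * z + of_real d))"
       "Im (of_real a * z + of_real b) = Im (z * (of_real c * z + of_real d))" using assms by auto
  thus ?thesis by (simp add: power2_eq_square algebra_simps)
qed

lemma mob_mid_iff:
  assumes "sl2 M" "mob M = mid"
  shows "M = (1,0,0,1) \<or> M = (-1,0,0,-1)"
proof -
  obtain a b c d where M: "M = (a,b,c,d)" by (cases M)
  have det: "a*d - b*c = 1" using assms(1) M by (simp add: sl2_def)
  have i1: "\<i> \<in> uhp" and i2: "2*\<i> \<in> uhp" by (auto simp: uhp_def)
  have "mob M \<i> = \<i>" "mob M (2*\<i>) = 2*\<i>" using assms(2) i1 i2 mid_eval by auto
  hence "of_real a * \<i> + of_real b = \<i> * (of_real c * \<i> + of_real d)"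
        "of_real a * (2*\<i>) + of_real b = (2*\<i>) * (of_real c * (2*\<i>) + of_real d)"
    using fix_iff[OF det i1] fix_iff[OF det i2] M by auto
  from this[THEN fix_components] have "b = -c" "a = d" "b = - 4 * c" by auto
  hence "c = 0" "b = 0" "a = d" by auto
  with det have "a*a = 1" by simp
  hence "a = 1 \<or> a = -1" using square_eq_1_iff by blast
  thus ?thesis using M \<open>c=0\<close> \<open>b=0\<close> \<open>a=d\<close> by auto
qed

lemma mob_negI: "mob (-1,0,0,-1) = mid"
  using mob_neg[of "(1,0,0,1)"] mob_id by (simp add: mneg_def)

lemma order_two_trace:
  assumes "sl2 (a,b,c,d)" "order_two (mob (a,b,c,d))"
  shows "d = -a"
proof (rule ccontr)
  assume nz: "d \<noteq> -a"
  hence nz': "a + d \<noteq> 0" by linarith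
  let ?M = "(a,b,c,d)"
  have "mob (mmul ?M ?M) = mid" using assms mob_mmul[OF assms(1) assms(1)] by (simp add: order_two_def)
  hence "mmul ?M ?M = (1,0,0,1) \<or> mmul ?M ?M = (-1,0,0,-1)" using mob_mid_iff sl2_mmul assms(1) by blast
  hence e: "b*(a+d) = 0" "c*(a+d) = 0" "a*a+b*c = 1 \<or> a*a+b*c = -1" "c*b+d*d = a*a+b*c"
    by (auto simp: mmul_def algebra_simps)
  hence "b = 0" "c = 0" using nz' by auto
  with e have "a*a = 1 \<or> a*a = -1" by auto
  hence "a*a = 1" using zero_le_square[of a] by linarith
  hence a1: "a = 1 \<or> a = -1" using square_eq_1_iff by blast
  have ad: "a*d = 1" using assms(1) \<open>b=0\<close> by (simp add: sl2_def)
  from a1 have "(a = 1 \<and> d = 1) \<or> (a = -1 \<and> d = -1)"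
  proof
    assume "a = 1" thus ?thesis using ad by simp
  next
    assume "a = -1" thus ?thesis using ad by simp
  qed
  hence "mob ?M = mid" using mob_id mob_negI \<open>b=0\<close> \<open>c=0\<close> by auto
  thus False using assms(2) by (simp add: order_two_def)
qed

lemma trace0_order_two:
  assumes "sl2 (a,b,c,-a)"
  shows "mcomp (mob (a,b,c,-a)) (mob (a,b,c,-a)) = mid"
proof -
  have "mmul (a,b,c,-a) (a,b,c,-a) = (-1,0,0,-1)" using assms
    by (simp add: mmul_def sl2_def algebra_simps)
  thus ?thesis using mob_mmul[OF assms assms] mob_negI by simp
qed

lemma trace0_fixed:
  assumes "sl2 (a,b,c,-a)" "z \<in> uhp" "mob (a,b,c,-a) z = z"
  shows "a = c * Re z \<and> b = - c * (Re z ^ 2 + Im z ^ 2) \<and> (c * Im z)^2 = 1"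
proof -
  have det: "a*(-a) - b*c = 1" using assms(1) by (simp add: sl2_def)
  have y: "Im z > 0" using assms(2) by (simp add: uhp_def)
  have "of_real a * z + of_real b = z * (of_real c * z + of_real (-a))"
    using fix_iff[OF det assms(2)] assms(3) by blast
  hence "a * Re z + b = c * (Re z ^ 2 - Im z ^ 2) + (-a) * Re z \<and> a * Im z = 2 * c * Re z * Im z + (-a) * Im z"
    by (rule fix_components)
  hence e1: "a * Re z + b = c * (Re z ^ 2 - Im z ^ 2) - a * Re z" and e2: "2 * a * Im z = 2 * c * Re z * Im z"
    by (auto simp: algebra_simps)
  from e2 y have a: "a = c * Re z" by simp
  from e1 a have b: "b = - c * (Re z ^ 2 + Im z ^ 2)" by (simp add: algebra_simps power2_eq_square)
  have "(c * Im z)^2 = 1" using det unfolding a b by (simp add: algebra_simps power2_eq_square)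
  with a b show ?thesis by simp
qed

lemma trace0_fixed_exists:
  assumes "sl2 (a,b,c,-a)"
  shows "\<exists>z\<in>uhp. mob (a,b,c,-a) z = z"
proof -
  have det: "a*(-a) - b*c = 1" using assms(1) by (simp add: sl2_def)
  have c: "c \<noteq> 0" proof assume "c = 0" with det have "-(a*a) = 1" by simp
    thus False using zero_le_square[of a] by linarith qed
  have b: "b = -(1 + a*a)/c" using det c by (simp add: field_simps) 
  define x where "x = a/c"
  define y where "y = 1/\<bar>c\<bar>"
  define z where "z = Complex x y"
  have z: "z \<in> uhp" using c by (simp add: z_def y_def uhp_def)
  have cx: "c*x = a" using c by (simp add: x_def)
  have cy: "c*c*(y*y) = 1" using c by (simp add: y_def abs_mult_self_eq flip: abs_mult)
  have bc: "b*c = -(1+a*a)" using det by (simp add: algebra_simps)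
  have "c * (2*a*x + b - c*x*x + c*y*y) = 2*a*(c*x) + b*c - (c*x)*(c*x) + c*c*(y*y)"
    by (simp add: algebra_simps)
  also have "\<dots> = 0" unfolding cx cy bc by simp
  finally have "2*a*x + b - c*x*x + c*y*y = 0" using c by simp
  hence re: "a*x + b = c*(x*x - y*y) - a*x" by (simp add: algebra_simps)
  have im: "a*y = 2*c*x*y - a*y" using cx by (simp add: algebra_simps)
  have "of_real a * z + of_real b = z * (of_real c * z + of_real (-a))"
    using re im by (simp add: complex_eq_iff z_def algebra_simps)
  thus ?thesis using fix_iff[OF det z] z by blast
qed



lemma order_two_iff:
  "order_two \<sigma> \<longleftrightarrow> \<sigma> \<noteq> mid \<and> (\<forall>w\<in>uhp. \<sigma> (\<sigma> w) = w)"
proof -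
  have "mcomp \<sigma> \<sigma> = mid \<longleftrightarrow> (\<forall>w\<in>uhp. \<sigma> (\<sigma> w) = w)"
  proof
    assume h: "mcomp \<sigma> \<sigma> = mid"
    show "\<forall>w\<in>uhp. \<sigma> (\<sigma> w) = w"
    proof
      fix w assume "w \<in> uhp"
      thus "\<sigma> (\<sigma> w) = w" using fun_cong[OF h, of w] by (simp add: mcomp_def mid_def)
    qed
  next
    assume h: "\<forall>w\<in>uhp. \<sigma> (\<sigma> w) = w"
    show "mcomp \<sigma> \<sigma> = mid"
      by (rule ext) (simp add: mcomp_def mid_def h)
  qed
  thus ?thesis by (simp add: order_two_def)
qed

lemma P_trace0:
  assumes "\<sigma> \<in> PSL2R" "order_two \<sigma>"
  obtains a b c where "sl2 (a,b,c,-a)" "\<sigma> = mob (a,b,c,-a)"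
proof -
  obtain M where M: "sl2 M" "\<sigma> = mob M" using assms(1) PSL2R_E by blast
  obtain a b c d where Md: "M = (a,b,c,d)" by (cases M)
  have "d = -a" using order_two_trace[of a b c d] M Md assms(2) by simp
  thus ?thesis using that M Md by simp
qed

lemma U1:
  assumes "\<sigma> \<in> PSL2R" "order_two \<sigma>"
  shows "\<exists>!z. z \<in> uhp \<and> \<sigma> z = z"
proof -
  obtain a b c where M: "sl2 (a,b,c,-a)" "\<sigma> = mob (a,b,c,-a)" using P_trace0 assms by blast
  obtain z where z: "z \<in> uhp" "\<sigma> z = z" using trace0_fixed_exists[OF M(1)] M(2) by blast
  moreover have "w = z" if w: "w \<in> uhp" "\<sigma> w = w" for w
  proof -
    have fz: "a = c * Re z \<and> b = - c * (Re z ^ 2 + Im z ^ 2) \<and> (c * Im z)^2 = 1"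
      using trace0_fixed[OF M(1)] z M(2) by blast
    have fw: "a = c * Re w \<and> b = - c * (Re w ^ 2 + Im w ^ 2) \<and> (c * Im w)^2 = 1"
      using trace0_fixed[OF M(1)] w M(2) by blast
    have yz: "Im z > 0" "Im w > 0" using z w by (auto simp: uhp_def)
    have c: "c \<noteq> 0" using fz by auto
    have "(c * Im z)^2 = (c * Im w)^2" using fz fw by simp
    hence "c * Im z = c * Im w \<or> c * Im z = - (c * Im w)" by (simp add: power2_eq_iff)
    moreover have "c * Im z \<noteq> - (c * Im w)"
    proof
      assume "c * Im z = - (c * Im w)"
      hence "c * (Im z + Im w) = 0" by (simp add: algebra_simps)
      thus False using c yz by simp
    qed
    ultimately have "Im z = Im w" using c by simp
    moreover have "Re z = Re w" using fz fw c by simp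
    ultimately show ?thesis by (simp add: complex_eq_iff)
  qed
  ultimately show ?thesis by blast
qed

lemma U2:
  assumes "\<sigma>1 \<in> PSL2R" "order_two \<sigma>1" "\<sigma>2 \<in> PSL2R" "order_two \<sigma>2"
    "z \<in> uhp" "\<sigma>1 z = z" "\<sigma>2 z = z"
  shows "\<sigma>1 = \<sigma>2"
proof -
  obtain a b c where M: "sl2 (a,b,c,-a)" "\<sigma>1 = mob (a,b,c,-a)" using P_trace0 assms(1,2) by blast
  obtain a' b' c' where M': "sl2 (a',b',c',-a')" "\<sigma>2 = mob (a',b',c',-a')" using P_trace0 assms(3,4) by blast
  have f1: "a = c * Re z \<and> b = - c * (Re z ^ 2 + Im z ^ 2) \<and> (c * Im z)^2 = 1"
    using trace0_fixed[OF M(1)] assms M(2) by blast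
  have f2: "a' = c' * Re z \<and> b' = - c' * (Re z ^ 2 + Im z ^ 2) \<and> (c' * Im z)^2 = 1"
    using trace0_fixed[OF M'(1)] assms M'(2) by blast
  have y: "Im z > 0" using assms(5) by (simp add: uhp_def)
  have "(c * Im z)^2 = (c' * Im z)^2" using f1 f2 by simp
  hence "c * Im z = c' * Im z \<or> c * Im z = - (c' * Im z)" by (simp add: power2_eq_iff)
  moreover have "c = - c'" if "c * Im z = - (c' * Im z)"
  proof -
    have "(c + c') * Im z = 0" using that by (simp add: algebra_simps)
    thus ?thesis using y by simp
  qed
  ultimately have "c = c' \<or> c = - c'" using y by auto
  thus ?thesis
  proof
    assume "c = c'" thus ?thesis using f1 f2 M M' by simp
  next
    assume "c = - c'"
    hence "(a',b',c',-a') = mneg (a,b,c,-a)" using f1 f2 by (simp add: mneg_def)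
    hence "\<sigma>2 = mob (mneg (a,b,c,-a))" using M'(2) by simp
    thus ?thesis using M(2) mob_neg[of "(a,b,c,-a)"] by simp
  qed
qed



lemma norm4_le: "norm ((p,q,r,s)::real\<times>real\<times>real\<times>real) \<le> \<bar>p\<bar>+\<bar>q\<bar>+\<bar>r\<bar>+\<bar>s\<bar>"
  using norm_Pair_le[of p "(q,r,s)"] norm_Pair_le[of q "(r,s)"] norm_Pair_le[of r s] by simp

lemma dist4: "dist ((a,b,c,d)::real\<times>real\<times>real\<times>real) (a',b',c',d') = norm (a-a', b-b', c-c', d-d')"
  by (simp add: dist_norm)

lemma comp_le_norm4:
  fixes p q r s :: real
  shows "\<bar>p\<bar> \<le> norm (p,q,r,s)" "\<bar>q\<bar> \<le> norm (p,q,r,s)" "\<bar>r\<bar> \<le> norm (p,q,r,s)" "\<bar>s\<bar> \<le> norm (p,q,r,s)"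
proof -
  show "\<bar>p\<bar> \<le> norm (p,q,r,s)" using norm_fst_le[of p "(q,r,s)"] by simp
  show "\<bar>q\<bar> \<le> norm (p,q,r,s)" using norm_fst_le[of q "(r,s)"] norm_snd_le[of "(q,r,s)" p] by simp
  show "\<bar>r\<bar> \<le> norm (p,q,r,s)" using norm_fst_le[of r s] norm_snd_le[of "(r,s)" q] norm_snd_le[of "(q,r,s)" p] by simp
  show "\<bar>s\<bar> \<le> norm (p,q,r,s)" using norm_snd_le[of s r] norm_snd_le[of "(r,s)" q] norm_snd_le[of "(q,r,s)" p] by simp
qed

lemma fixed_bound:
  assumes "sl2 (a,b,c,d)" "z \<in> uhp" "mob (a,b,c,d) z = z"
  shows "\<bar>c\<bar> \<le> 1 / Im z" "\<bar>d\<bar> \<le> 1 + \<bar>Re z\<bar> / Im z"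
        "\<bar>a\<bar> \<le> 2 * \<bar>Re z\<bar> / Im z + (1 + \<bar>Re z\<bar> / Im z)"
        "\<bar>b\<bar> \<le> (Re z ^ 2 + Im z ^ 2) / Im z"
proof -
  define x where "x = Re z"
  define y where "y = Im z"
  have det: "a*d - b*c = 1" using assms(1) by (simp add: sl2_def)
  have y: "y > 0" using assms(2) by (simp add: uhp_def y_def)
  have "a * x + b = c * (x ^ 2 - y ^ 2) + d * x \<and> a * y = 2 * c * x * y + d * y"
    unfolding x_def y_def by (rule fix_components) (use fix_iff[OF det assms(2)] assms(3) in blast)
  hence e1: "a * x + b = c * (x ^ 2 - y ^ 2) + d * x" and e2: "a * y = (2 * c * x + d) * y"
    by (auto simp: algebra_simps)
  from e2 y have a: "a = 2*c*x + d" by simp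
  from e1 a have b: "b = - c * (x^2 + y^2)" by (simp add: algebra_simps power2_eq_square)
  have "(d + c*x)^2 + (c*y)^2 = 1" using det unfolding a b by (simp add: algebra_simps power2_eq_square)
  hence s1: "(c*y)^2 \<le> 1" and s2: "(d + c*x)^2 \<le> 1" by (smt (verit) zero_le_power2)+
  hence "\<bar>c*y\<bar> \<le> 1" "\<bar>d + c*x\<bar> \<le> 1" by (simp_all add: abs_square_le_1)
  hence cy: "\<bar>c\<bar> * y \<le> 1" using y by (simp add: abs_mult)
  hence c: "\<bar>c\<bar> \<le> 1 / y" using y by (simp add: pos_le_divide_eq)
  have cx: "\<bar>c * x\<bar> \<le> \<bar>x\<bar> / y"
  proof -
    have "\<bar>c * x\<bar> = \<bar>c\<bar> * \<bar>x\<bar>" by (simp add: abs_mult)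
    also have "\<dots> \<le> (1/y) * \<bar>x\<bar>" using c by (rule mult_right_mono) simp
    finally show ?thesis by simp
  qed
  have d: "\<bar>d\<bar> \<le> 1 + \<bar>x\<bar> / y" using \<open>\<bar>d + c*x\<bar> \<le> 1\<close> cx by linarith
  show "\<bar>c\<bar> \<le> 1 / Im z" using c y_def by simp
  show "\<bar>d\<bar> \<le> 1 + \<bar>Re z\<bar> / Im z" using d x_def y_def by simp
  show "\<bar>a\<bar> \<le> 2 * \<bar>Re z\<bar> / Im z + (1 + \<bar>Re z\<bar> / Im z)"
    using a cx d unfolding x_def[symmetric] y_def[symmetric] by linarith
  have "\<bar>b\<bar> = \<bar>c\<bar> * (x^2+y^2)" using b by (simp add: abs_mult)
  also have "\<dots> \<le> (1/y) * (x^2+y^2)" using c by (rule mult_right_mono) simp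
  finally show "\<bar>b\<bar> \<le> (Re z ^ 2 + Im z ^ 2) / Im z" by (simp add: x_def y_def)
qed



lemma prod_bound: "abs u \<le> (K::real) \<Longrightarrow> abs v \<le> r \<Longrightarrow> abs (u * v) \<le> K*r"
  by (simp add: abs_mult mult_mono')

lemma near_id:
  fixes a b c d a' b' c' d' K r :: real
  assumes "a*d - b*c = 1" "\<bar>a\<bar>\<le>K" "\<bar>b\<bar>\<le>K" "\<bar>c\<bar>\<le>K" "\<bar>d\<bar>\<le>K" "dist (a,b,c,d) (a',b',c',d') \<le> r"
  shows "dist (1,0,0,1) (mmul (adj (a,b,c,d)) (a',b',c',d')) \<le> 8*K*r"
proof -
  have nd: "norm (a-a', b-b', c-c', d-d') \<le> r" using assms(6) unfolding dist4 .
  note cl = comp_le_norm4[where p="a-a'" and q="b-b'" and r="c-c'" and s="d-d'"]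
  have da: "\<bar>a-a'\<bar> \<le> r" "\<bar>b-b'\<bar> \<le> r" "\<bar>c-c'\<bar> \<le> r" "\<bar>d-d'\<bar> \<le> r"
    using nd cl(1) apply linarith using nd cl(2) apply linarith using nd cl(3) apply linarith
    using nd cl(4) by linarith
  have e1: "1 - (d*a' - b*c') = d*(a-a') - b*(c-c')" using assms(1) by (simp add: algebra_simps)
  have e2: "0 - (d*b' - b*d') = d*(b-b') - b*(d-d')" by (simp add: algebra_simps)
  have e3: "0 - (-c*a' + a*c') = -c*(a-a') + a*(c-c')" by (simp add: algebra_simps)
  have e4: "1 - (-c*b' + a*d') = a*(d-d') - c*(b-b')" using assms(1) by (simp add: algebra_simps)
  have t1: "\<bar>d*(a-a') - b*(c-c')\<bar> \<le> 2*K*r"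
    using prod_bound[OF assms(5) da(1)] prod_bound[OF assms(3) da(3)] by linarith
  have t2: "\<bar>d*(b-b') - b*(d-d')\<bar> \<le> 2*K*r"
    using prod_bound[OF assms(5) da(2)] prod_bound[OF assms(3) da(4)] by linarith
  have t3: "\<bar>-c*(a-a') + a*(c-c')\<bar> \<le> 2*K*r"
    using prod_bound[of "-c" K, OF _ da(1)] prod_bound[OF assms(2) da(3)] assms(4) by auto
  have t4: "\<bar>a*(d-d') - c*(b-b')\<bar> \<le> 2*K*r"
    using prod_bound[OF assms(2) da(4)] prod_bound[OF assms(4) da(2)] by linarith
  have "dist (1,0,0,1) (mmul (adj (a,b,c,d)) (a',b',c',d')) =
        norm (1 - (d*a' - b*c'), 0 - (d*b' - b*d'), 0 - (-c*a' + a*c'), 1 - (-c*b' + a*d'))"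
    unfolding mmul_def adj_def dist_norm by (simp add: algebra_simps)
  also have "\<dots> \<le> 8*K*r" unfolding e1 e2 e3 e4
    using norm4_le[of "d*(a-a') - b*(c-c')" "d*(b-b') - b*(d-d')" "-c*(a-a') + a*(c-c')" "a*(d-d') - c*(b-b')"]
      t1 t2 t3 t4 by linarith
  finally show ?thesis .
qed

lemma mmul_assoc: "mmul M (mmul N P) = mmul (mmul M N) P"
  by (cases M; cases N; cases P) (simp add: mmul_def algebra_simps)

lemma mmul_id: "mmul (1,0,0,1) M = M"
  by (cases M) (simp add: mmul_def)

lemma stab_finite:
  assumes G: "discrete_subgroup \<Gamma>" and z: "z \<in> uhp"
  shows "finite (stab \<Gamma> z)"
proof (rule ccontr)
  assume inf: "infinite (stab \<Gamma> z)"
  define S where "S = {N. sl2 N \<and> mob N \<in> \<Gamma>}"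
  define T where "T = {M \<in> S. mob M z = z}"
  define K where "K = (2 * \<bar>Re z\<bar> / Im z + (1 + \<bar>Re z\<bar> / Im z)) + (Re z ^ 2 + Im z ^ 2) / Im z
     + 1 / Im z + (1 + \<bar>Re z\<bar> / Im z)"
  have y: "Im z > 0" using z by (simp add: uhp_def)
  have Tb: "\<bar>a\<bar> \<le> K \<and> \<bar>b\<bar> \<le> K \<and> \<bar>c\<bar> \<le> K \<and> \<bar>d\<bar> \<le> K" if "(a,b,c,d) \<in> T" for a b c d
  proof -
    have h: "sl2 (a,b,c,d)" "mob (a,b,c,d) z = z" using that by (auto simp: T_def S_def)
    note fb = fixed_bound[OF h(1) z h(2)]
    have nn: "0 \<le> \<bar>Re z\<bar> / Im z" "0 \<le> (Re z ^ 2 + Im z ^ 2) / Im z" "0 \<le> 1 / Im z" using y by auto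
    show ?thesis using fb nn unfolding K_def by linarith
  qed
  have GP: "\<Gamma> \<subseteq> PSL2R" using G by (simp add: discrete_subgroup_def)
  have "stab \<Gamma> z \<subseteq> mob ` T"
  proof
    fix f assume f: "f \<in> stab \<Gamma> z"
    hence "f \<in> PSL2R" using GP by (auto simp: stab_def)
    then obtain M where "sl2 M" "f = mob M" by (rule PSL2R_E)
    thus "f \<in> mob ` T" using f by (auto simp: T_def S_def stab_def)
  qed
  hence infT: "infinite T" using inf finite_surj by blast
  have "T \<subseteq> cball 0 (4*K)"
  proof
    fix M assume M: "M \<in> T"
    obtain a b c d where Md: "M = (a,b,c,d)" by (cases M)
    have "norm M \<le> 4*K" using Tb[of a b c d] M Md norm4_le[of a b c d] by simp
    thus "M \<in> cball 0 (4*K)" by simp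
  qed
  hence bT: "bounded T" using bounded_cball bounded_subset by blast
  obtain L where L: "L islimpt T" using bounded_infinite_imp_islimpt[OF order_refl bT infT] by blast
  have IS: "(1,0,0,1) \<in> S" using G mob_id sl2_id by (simp add: S_def discrete_subgroup_def)
  hence "(1,0,0,1) isolated_in S" using G by (simp add: S_def discrete_subgroup_def)
  then obtain e where e: "e > 0" "\<forall>y\<in>S. dist (1,0,0,1) y < e \<longrightarrow> y = (1,0,0,1)"
    unfolding isolated_in_dist_Ex_iff by blast
  have K0: "K \<ge> 0" using y unfolding K_def by auto
  define \<delta> where "\<delta> = e / (8*K + 1)"
  have \<delta>: "\<delta> > 0" using e K0 by (simp add: \<delta>_def)
  obtain M1 where M1: "M1 \<in> T" "M1 \<noteq> L" "dist M1 L < \<delta>/2"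
    using L \<delta> unfolding islimpt_approachable by (meson half_gt_zero)
  have "dist M1 L > 0" using M1 by simp
  then obtain M2 where M2: "M2 \<in> T" "M2 \<noteq> L" "dist M2 L < dist M1 L"
    using L unfolding islimpt_approachable by blast
  have ne: "M1 \<noteq> M2" using M2 by auto
  have d12: "dist M1 M2 \<le> \<delta>" using M1 M2 dist_triangle[of M1 M2 L] by (simp add: dist_commute)
  obtain a b c d where M1d: "M1 = (a,b,c,d)" by (cases M1)
  obtain a' b' c' d' where M2d: "M2 = (a',b',c',d')" by (cases M2)
  have s1: "sl2 M1" "mob M1 \<in> \<Gamma>" and s2: "sl2 M2" "mob M2 \<in> \<Gamma>" using M1 M2 by (auto simp: T_def S_def)
  define N where "N = mmul (adj M1) M2"
  have NS: "N \<in> S"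
  proof -
    have "mob N = mcomp (minv (mob M1)) (mob M2)"
      unfolding N_def using mob_mmul[OF sl2_adj[OF s1(1)] s2(1)] mob_adj[OF s1(1)] by simp
    moreover have "minv (mob M1) \<in> \<Gamma>" using G s1 by (simp add: discrete_subgroup_def)
    ultimately have "mob N \<in> \<Gamma>" using G s2 by (simp add: discrete_subgroup_def)
    thus ?thesis using sl2_mmul[OF sl2_adj[OF s1(1)] s2(1)] by (simp add: S_def N_def)
  qed
  have NI: "N \<noteq> (1,0,0,1)"
  proof
    assume "N = (1,0,0,1)"
    hence "mmul M1 N = M1" by (cases M1) (simp add: mmul_def)
    moreover have "mmul M1 N = M2" unfolding N_def mmul_assoc mmul_adj[OF s1(1)] mmul_id ..
    ultimately show False using ne by simp
  qed
  have det: "a*d - b*c = 1" using s1 M1d by (simp add: sl2_def)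
  have "dist (1,0,0,1) N \<le> 8*K*\<delta>"
    unfolding N_def M1d M2d
    by (rule near_id[OF det]) (use Tb[of a b c d] M1 M1d d12 M2d in auto)
  also have "8*K*\<delta> < e"
  proof -
    have "8*K*\<delta> = e * (8*K) / (8*K+1)" by (simp add: \<delta>_def)
    also have "\<dots> < e" using e K0 by (simp add: divide_less_eq)
    finally show ?thesis .
  qed
  finally have "N = (1,0,0,1)" using e NS by blast
  thus False using NI by simp
qed



lemma involution_even:
  assumes "finite B" "\<forall>x\<in>B. g x \<in> B \<and> g (g x) = x \<and> g x \<noteq> x"
  shows "even (card B)"
  using assms
proof (induction "card B" arbitrary: B rule: less_induct)
  case less
  show ?case
  proof (cases "B = {}")
    case True thus ?thesis by simp
  next
    case False
    then obtain x where x: "x \<in> B" by blast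
    define B' where "B' = B - {x, g x}"
    have gx: "g x \<in> B" "g x \<noteq> x" "g (g x) = x" using less.prems x by auto
    have sub: "{x, g x} \<subseteq> B" using x gx by auto
    have c2: "card {x, g x} = 2" using gx by simp
    have le: "card {x, g x} \<le> card B" using card_mono[OF less.prems(1) sub] .
    have cB': "card B' = card B - 2" unfolding B'_def using card_Diff_subset[OF _ sub] less.prems(1) c2
      by (simp add: finite_subset[OF sub])
    have "even (card B')"
    proof (rule less.hyps)
      show "card B' < card B" using cB' le c2 by simp
      show "finite B'" using less.prems(1) by (simp add: B'_def)
      show "\<forall>y\<in>B'. g y \<in> B' \<and> g (g y) = y \<and> g y \<noteq> y"
      proof
        fix y assume y: "y \<in> B'"
        have yB: "y \<in> B" "y \<noteq> x" "y \<noteq> g x" using y by (auto simp: B'_def)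
        have gy: "g y \<in> B" "g (g y) = y" "g y \<noteq> y" using less.prems yB by auto
        have "g y \<noteq> x" using gy yB by metis
        moreover have "g y \<noteq> g x" using gy gx yB by metis
        ultimately show "g y \<in> B' \<and> g (g y) = y \<and> g y \<noteq> y" using gy by (simp add: B'_def)
      qed
    qed
    thus ?thesis using cB' le c2 by simp
  qed
qed

lemma minv_minv: "f \<in> PSL2R \<Longrightarrow> minv (minv f) = f"
proof (rule P_ext)
  assume f: "f \<in> PSL2R"
  show "minv (minv f) \<in> PSL2R" "f \<in> PSL2R" using f P_minv by auto
  fix w assume w: "w \<in> uhp"
  have "minv (minv f) w = minv (minv f) (minv f (f w))" using P_minv_r[OF f w] by simp
  also have "\<dots> = f w" using P_minv_r[OF P_minv[OF f] P_in[OF f w]] .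
  finally show "minv (minv f) w = f w" .
qed

lemma minv_mid: "minv mid = mid"
proof (rule P_ext)
  show "minv mid \<in> PSL2R" "mid \<in> PSL2R" using P_minv mid_P by auto
  fix w assume w: "w \<in> uhp"
  have "mid (minv mid w) = w" using P_minv_l[OF mid_P w] .
  moreover have "minv mid w \<in> uhp" using P_in[OF P_minv[OF mid_P] w] .
  ultimately show "minv mid w = mid w" using w mid_eval by metis
qed

lemma exists_order_two:
  assumes "A \<subseteq> PSL2R" "finite A" "even (card A)" "mid \<in> A" "\<forall>f\<in>A. minv f \<in> A"
  shows "\<exists>\<sigma>\<in>A. order_two \<sigma>"
proof -
  define F where "F = {f\<in>A. minv f = f}"
  define N where "N = {f\<in>A. minv f \<noteq> f}"
  have "even (card N)"
  proof (rule involution_even[where g = minv])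
    show "finite N" using assms(2) by (simp add: N_def)
    show "\<forall>x\<in>N. minv x \<in> N \<and> minv (minv x) = x \<and> minv x \<noteq> x"
      using assms(1,5) minv_minv by (auto simp: N_def)
  qed
  moreover have "card A = card F + card N"
  proof -
    have "A = F \<union> N" "F \<inter> N = {}" by (auto simp: F_def N_def)
    thus ?thesis using assms(2) card_Un_disjoint[of F N] by (simp add: F_def N_def)
  qed
  ultimately have eF: "even (card F)" using assms(3) by simp
  have midF: "mid \<in> F" using assms(4) minv_mid by (simp add: F_def)
  have finF: "finite F" using assms(2) by (simp add: F_def)
  have "F \<noteq> {mid}" using eF by auto
  then obtain f where f: "f \<in> F" "f \<noteq> mid" using midF by blast
  have fP: "f \<in> PSL2R" using f assms(1) by (auto simp: F_def)
  have "\<forall>w\<in>uhp. f (f w) = w"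
  proof
    fix w assume "w \<in> uhp"
    thus "f (f w) = w" using P_minv_l[OF fP] f by (metis (mono_tags, lifting) F_def mem_Collect_eq)
  qed
  hence "order_two f" using f(2) by (simp add: order_two_iff)
  thus ?thesis using f by (auto simp: F_def)
qed



lemma conj_eval: "w \<in> uhp \<Longrightarrow> conj_by c \<sigma> w = c (\<sigma> (c w))"
  by (simp add: conj_by_def)

theorem lemma3p7:
  assumes "real_fuchsian \<Gamma> c" and "\<gamma> \<in> \<Gamma>" and "admissible c \<gamma>"
  shows "(\<forall>z. z \<in> Cset c \<gamma> \<and> elliptic_even \<Gamma> z \<longrightarrow>
             (\<exists>!\<sigma>. \<sigma> \<in> Zset \<Gamma> c \<gamma> \<and> order_two \<sigma> \<and> \<sigma> z = z)) \<and>
         (\<forall>\<sigma>. \<sigma> \<in> Zset \<Gamma> c \<gamma> \<and> order_two \<sigma> \<longrightarrow>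
             (\<exists>!z. z \<in> Cset c \<gamma> \<and> elliptic_even \<Gamma> z \<and> \<sigma> z = z))"
proof -
  have G: "discrete_subgroup \<Gamma>" and cc: "complex_conjugation c" and cG: "conj_by c ` \<Gamma> = \<Gamma>"
    using assms(1) unfolding real_fuchsian_def by blast+
  have GP: "\<Gamma> \<subseteq> PSL2R" and midG: "mid \<in> \<Gamma>"
    and Gcomp: "\<And>f g. f \<in> \<Gamma> \<Longrightarrow> g \<in> \<Gamma> \<Longrightarrow> mcomp f g \<in> \<Gamma>"
    and Ginv: "\<And>f. f \<in> \<Gamma> \<Longrightarrow> minv f \<in> \<Gamma>"
    using G unfolding discrete_subgroup_def by blast+
  have c_in: "\<And>w. w \<in> uhp \<Longrightarrow> c w \<in> uhp" and c_c: "\<And>w. w \<in> uhp \<Longrightarrow> c (c w) = w"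
    using cc unfolding complex_conjugation_def by blast+
  have Gconj: "\<And>\<sigma>. \<sigma> \<in> \<Gamma> \<Longrightarrow> conj_by c \<sigma> \<in> \<Gamma>" using cG by blast
  have gP: "\<gamma> \<in> PSL2R" using assms(2) GP by blast
  have g_in: "\<And>w. w \<in> uhp \<Longrightarrow> \<gamma> w \<in> uhp" using P_in[OF gP] .
  have gi_in: "\<And>w. w \<in> uhp \<Longrightarrow> minv \<gamma> w \<in> uhp" using P_in[OF P_minv[OF gP]] .
  have g_gi: "\<And>w. w \<in> uhp \<Longrightarrow> \<gamma> (minv \<gamma> w) = w" using P_minv_l[OF gP] .
  have gi_g: "\<And>w. w \<in> uhp \<Longrightarrow> minv \<gamma> (\<gamma> w) = w" using P_minv_r[OF gP] .
  have Z_iff: "\<sigma> \<in> Zset \<Gamma> c \<gamma> \<longleftrightarrow> (\<forall>u\<in>uhp. c (\<sigma> (c (\<gamma> u))) = \<gamma> (\<sigma> u))"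
    if s: "\<sigma> \<in> \<Gamma>" "order_two \<sigma>" for \<sigma>
  proof -
    have sP: "\<sigma> \<in> PSL2R" using s GP by blast
    have ss: "\<And>w. w \<in> uhp \<Longrightarrow> \<sigma> (\<sigma> w) = w" using s(2) by (simp add: order_two_iff)
    have s_in: "\<And>w. w \<in> uhp \<Longrightarrow> \<sigma> w \<in> uhp" using P_in[OF sP] .
    have si_in: "\<And>w. w \<in> uhp \<Longrightarrow> minv \<sigma> w \<in> uhp" using P_in[OF P_minv[OF sP]] .
    have E: "\<And>w. w \<in> uhp \<Longrightarrow> mcomp (mcomp (conj_by c \<sigma>) \<gamma>) (minv \<sigma>) w = c (\<sigma> (c (\<gamma> (minv \<sigma> w))))"
      using si_in g_in by (simp add: mcomp_eval conj_eval)
    show ?thesis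
    proof
      assume z: "\<sigma> \<in> Zset \<Gamma> c \<gamma>"
      hence eq: "mcomp (mcomp (conj_by c \<sigma>) \<gamma>) (minv \<sigma>) = \<gamma>" unfolding Zset_def by blast
      show "\<forall>u\<in>uhp. c (\<sigma> (c (\<gamma> u))) = \<gamma> (\<sigma> u)"
      proof
        fix u assume u: "u \<in> uhp"
        have e1: "mcomp (mcomp (conj_by c \<sigma>) \<gamma>) (minv \<sigma>) (\<sigma> u) = c (\<sigma> (c (\<gamma> (minv \<sigma> (\<sigma> u)))))"
          by (rule E[OF s_in[OF u]])
        have e2: "mcomp (mcomp (conj_by c \<sigma>) \<gamma>) (minv \<sigma>) (\<sigma> u) = c (\<sigma> (c (\<gamma> u)))"
          using e1 by (simp only: P_minv_r[OF sP u])
        show "c (\<sigma> (c (\<gamma> u))) = \<gamma> (\<sigma> u)" using e2 fun_cong[OF eq, of "\<sigma> u"] by simp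
      qed
    next
      assume Q: "\<forall>u\<in>uhp. c (\<sigma> (c (\<gamma> u))) = \<gamma> (\<sigma> u)"
      have "mcomp (mcomp (conj_by c \<sigma>) \<gamma>) (minv \<sigma>) = \<gamma>"
      proof (rule P_ext)
        have "mcomp (mcomp (conj_by c \<sigma>) \<gamma>) (minv \<sigma>) \<in> \<Gamma>"
          by (intro Gcomp Ginv Gconj s(1) assms(2))
        thus "mcomp (mcomp (conj_by c \<sigma>) \<gamma>) (minv \<sigma>) \<in> PSL2R" using GP by blast
        show "\<gamma> \<in> PSL2R" by (rule gP)
        fix w assume w: "w \<in> uhp"
        have "c (\<sigma> (c (\<gamma> (minv \<sigma> w)))) = \<gamma> (\<sigma> (minv \<sigma> w))" using Q si_in[OF w] by blast
        thus "mcomp (mcomp (conj_by c \<sigma>) \<gamma>) (minv \<sigma>) w = \<gamma> w" using E[OF w] P_minv_l[OF sP w] by simp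
      qed
      thus "\<sigma> \<in> Zset \<Gamma> c \<gamma>" using s by (simp add: Zset_def)
    qed
  qed
  show ?thesis
  proof (intro conjI allI impI)
    fix z assume zh: "z \<in> Cset c \<gamma> \<and> elliptic_even \<Gamma> z"
    have z: "z \<in> uhp" "\<gamma> z = c z" using zh by (auto simp: Cset_def)
    define A where "A = stab \<Gamma> z"
    have "\<exists>\<sigma>\<in>A. order_two \<sigma>"
    proof (rule exists_order_two)
      show "A \<subseteq> PSL2R" using GP by (auto simp: A_def stab_def)
      show "finite A" "even (card A)" using zh by (auto simp: A_def elliptic_even_def)
      show "mid \<in> A" using midG z mid_eval by (simp add: A_def stab_def)
      show "\<forall>f\<in>A. minv f \<in> A"
      proof
        fix f assume f: "f \<in> A"
        hence "f \<in> \<Gamma>" "f z = z" by (auto simp: A_def stab_def)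
        moreover hence "minv f z = z" using P_minv_r[of f z] GP z by auto
        ultimately show "minv f \<in> A" using Ginv by (simp add: A_def stab_def)
      qed
    qed
    then obtain \<sigma> where sA: "\<sigma> \<in> A" and s2: "order_two \<sigma>" by blast
    have sG: "\<sigma> \<in> \<Gamma>" and sz: "\<sigma> z = z" using sA by (auto simp: A_def stab_def)
    have sP: "\<sigma> \<in> PSL2R" using sG GP by blast
    have ss: "\<And>w. w \<in> uhp \<Longrightarrow> \<sigma> (\<sigma> w) = w" using s2 by (simp add: order_two_iff)
    have s_in: "\<And>w. w \<in> uhp \<Longrightarrow> \<sigma> w \<in> uhp" using P_in[OF sP] .
    define \<tau> where "\<tau> = mcomp (mcomp (minv \<gamma>) (conj_by c \<sigma>)) \<gamma>"
    have tG: "\<tau> \<in> \<Gamma>" unfolding \<tau>_def by (intro Gcomp Ginv Gconj sG assms(2))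
    have tP: "\<tau> \<in> PSL2R" using tG GP by blast
    have tE: "\<And>w. w \<in> uhp \<Longrightarrow> \<tau> w = minv \<gamma> (c (\<sigma> (c (\<gamma> w))))"
      unfolding \<tau>_def using g_in by (simp add: mcomp_eval conj_eval)
    have gcz: "minv \<gamma> (c z) = z" using gi_g[OF z(1)] z(2) by simp
    have t_tz: "\<tau> z = z" using tE[OF z(1)] z(2) c_c[OF z(1)] sz gcz by simp
    have tt: "\<forall>w\<in>uhp. \<tau> (\<tau> w) = w"
    proof
      fix w assume w: "w \<in> uhp"
      define v where "v = c (\<gamma> w)"
      have v: "v \<in> uhp" using c_in g_in w by (simp add: v_def)
      have tw: "\<tau> w = minv \<gamma> (c (\<sigma> v))" using tE[OF w] v_def by simp
      have tw_in: "\<tau> w \<in> uhp" using tw gi_in c_in s_in v by simp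
      have "\<gamma> (\<tau> w) = c (\<sigma> v)" using tw g_gi c_in s_in v by simp
      hence "c (\<gamma> (\<tau> w)) = \<sigma> v" using c_c s_in v by simp
      hence "\<sigma> (c (\<gamma> (\<tau> w))) = v" using ss v by simp
      hence "c (\<sigma> (c (\<gamma> (\<tau> w)))) = \<gamma> w" using c_c g_in w v_def by simp
      thus "\<tau> (\<tau> w) = w" using tE[OF tw_in] gi_g w by simp
    qed
    have tnm: "\<tau> \<noteq> mid"
    proof
      assume tm: "\<tau> = mid"
      have "\<sigma> = mid"
      proof (rule P_ext[OF sP mid_P])
        fix u assume u: "u \<in> uhp"
        define w where "w = minv \<gamma> (c u)"
        have w: "w \<in> uhp" "\<gamma> w = c u" using gi_in g_gi c_in u by (auto simp: w_def)
        have "\<tau> w = w" using tm w mid_eval by simp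
        hence "\<gamma> (\<tau> w) = \<gamma> w" by simp
        hence "\<gamma> (minv \<gamma> (c (\<sigma> (c (\<gamma> w))))) = \<gamma> w" using tE[OF w(1)] by simp
        hence "c (\<sigma> (c (\<gamma> w))) = \<gamma> w" using g_gi c_in s_in w c_in u by simp
        hence "c (\<sigma> u) = c u" using w c_c u by simp
        hence "c (c (\<sigma> u)) = c (c u)" by simp
        thus "\<sigma> u = mid u" using c_c s_in u mid_eval by simp
      qed
      thus False using s2 by (simp add: order_two_def)
    qed
    have t2: "order_two \<tau>" using tt tnm by (simp add: order_two_iff)
    have "\<tau> = \<sigma>" using U2[OF tP t2 sP s2 z(1) t_tz sz] .
    have Q: "\<forall>u\<in>uhp. c (\<sigma> (c (\<gamma> u))) = \<gamma> (\<sigma> u)"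
    proof
      fix u assume u: "u \<in> uhp"
      have "\<tau> u = \<sigma> u" using \<open>\<tau> = \<sigma>\<close> by simp
      hence "\<gamma> (\<tau> u) = \<gamma> (\<sigma> u)" by simp
      thus "c (\<sigma> (c (\<gamma> u))) = \<gamma> (\<sigma> u)" using tE[OF u] g_gi c_in s_in g_in u by simp
    qed
    hence sZ: "\<sigma> \<in> Zset \<Gamma> c \<gamma>" using Z_iff[OF sG s2] by simp
    show "\<exists>!\<sigma>. \<sigma> \<in> Zset \<Gamma> c \<gamma> \<and> order_two \<sigma> \<and> \<sigma> z = z"
    proof (rule ex1I[of _ \<sigma>])
      show "\<sigma> \<in> Zset \<Gamma> c \<gamma> \<and> order_two \<sigma> \<and> \<sigma> z = z" using sZ s2 sz by simp
      fix \<sigma>' assume h: "\<sigma>' \<in> Zset \<Gamma> c \<gamma> \<and> order_two \<sigma>' \<and> \<sigma>' z = z"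
      have "\<sigma>' \<in> PSL2R" using h GP by (auto simp: Zset_def)
      thus "\<sigma>' = \<sigma>" using U2[OF _ _ sP s2 z(1) _ sz] h by blast
    qed
  next
    fix \<sigma> assume h: "\<sigma> \<in> Zset \<Gamma> c \<gamma> \<and> order_two \<sigma>"
    have sG: "\<sigma> \<in> \<Gamma>" and s2: "order_two \<sigma>" using h by (auto simp: Zset_def)
    have sP: "\<sigma> \<in> PSL2R" using sG GP by blast
    have ss: "\<And>w. w \<in> uhp \<Longrightarrow> \<sigma> (\<sigma> w) = w" using s2 by (simp add: order_two_iff)
    have s_in: "\<And>w. w \<in> uhp \<Longrightarrow> \<sigma> w \<in> uhp" using P_in[OF sP] .
    have Q: "\<forall>u\<in>uhp. c (\<sigma> (c (\<gamma> u))) = \<gamma> (\<sigma> u)" using Z_iff[OF sG s2] h by simp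
    obtain z where z: "z \<in> uhp" "\<sigma> z = z" and zu: "\<And>w. w \<in> uhp \<Longrightarrow> \<sigma> w = w \<Longrightarrow> w = z"
      using U1[OF sP s2] by blast
    have Cz: "z \<in> Cset c \<gamma>"
    proof -
      define v where "v = c (\<gamma> z)"
      have v: "v \<in> uhp" using c_in g_in z by (simp add: v_def)
      have "c (\<sigma> v) = \<gamma> z" using Q z v_def by auto
      hence "\<sigma> v = v" using c_c s_in v v_def by (metis)
      hence "v = z" using zu v by blast
      hence "\<gamma> z = c z" using c_c g_in z v_def by metis
      thus ?thesis using z by (simp add: Cset_def)
    qed
    have fin: "finite (stab \<Gamma> z)" using stab_finite[OF G z(1)] .
    have ev: "even (card (stab \<Gamma> z))"
    proof (rule involution_even[where g = "mcomp \<sigma>"])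
      show "finite (stab \<Gamma> z)" by (rule fin)
      show "\<forall>f\<in>stab \<Gamma> z. mcomp \<sigma> f \<in> stab \<Gamma> z \<and> mcomp \<sigma> (mcomp \<sigma> f) = f \<and> mcomp \<sigma> f \<noteq> f"
      proof
        fix f assume f: "f \<in> stab \<Gamma> z"
        have fG: "f \<in> \<Gamma>" and fz: "f z = z" using f by (auto simp: stab_def)
        have fP: "f \<in> PSL2R" using fG GP by blast
        have "mcomp \<sigma> f \<in> stab \<Gamma> z" using Gcomp[OF sG fG] fz z mcomp_eval by (simp add: stab_def)
        moreover have "mcomp \<sigma> (mcomp \<sigma> f) = f"
        proof (rule P_ext[OF P_mcomp[OF sP P_mcomp[OF sP fP]] fP])
          fix w assume "w \<in> uhp"
          thus "mcomp \<sigma> (mcomp \<sigma> f) w = f w" using mcomp_eval ss P_in[OF fP] by simp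
        qed
        moreover have "mcomp \<sigma> f \<noteq> f"
        proof
          assume e: "mcomp \<sigma> f = f"
          have "\<sigma> = mid"
          proof (rule P_ext[OF sP mid_P])
            fix u assume u: "u \<in> uhp"
            define w where "w = minv f u"
            have w: "w \<in> uhp" "f w = u" using P_in[OF P_minv[OF fP] u] P_minv_l[OF fP u] by (auto simp: w_def)
            have "mcomp \<sigma> f w = f w" using e by simp
            thus "\<sigma> u = mid u" using w mcomp_eval mid_eval u by simp
          qed
          thus False using s2 by (simp add: order_two_def)
        qed
        ultimately show "mcomp \<sigma> f \<in> stab \<Gamma> z \<and> mcomp \<sigma> (mcomp \<sigma> f) = f \<and> mcomp \<sigma> f \<noteq> f" by simp
      qed
    qed
    have ee: "elliptic_even \<Gamma> z" using z fin ev by (simp add: elliptic_even_def)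
    show "\<exists>!z. z \<in> Cset c \<gamma> \<and> elliptic_even \<Gamma> z \<and> \<sigma> z = z"
    proof (rule ex1I[of _ z])
      show "z \<in> Cset c \<gamma> \<and> elliptic_even \<Gamma> z \<and> \<sigma> z = z" using Cz ee z by simp
      fix w assume "w \<in> Cset c \<gamma> \<and> elliptic_even \<Gamma> w \<and> \<sigma> w = w"
      thus "w = z" using zu by (auto simp: Cset_def)
    qed
  qed
qed

end
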